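(* Let $r\ge3$ and $Y,Z\subseteq\{1,\dots,r-1\}$ with $0\le|Y|<|Z|<r$. For a finite $\Lambda$ write $\sigma_i(\pm\Lambda)$ where $\sigma_i$ is the map defined by $C_\Lambda$ and $\pm\Lambda=\Lambda\cup-\Lambda$, and let $(i\ i{+}1)$ denote the transposition acting on subsets of $\{1,\dots,r-1\}$. Then: for $i=1,\dots,r-2$: $\sigma_i(\pm\Phi_{r,Z})=\pm\Phi_{r,(i\,i+1)(Z)}$, $\sigma_i(\pm\Psi_{r,Y})=\pm\Psi_{r,(i\,i+1)(Y)}$, $\sigma_i(\pm\Psi'_{r,Y})=\pm\Psi'_{r,(i\,i+1)(Y)}$; if $r-1\notin Z$: $\sigma_{r-1}(\pm\Phi_{r,Z})=\sigma_r(\pm\Phi_{r,Z})=\pm\Phi_{r,Z}$; if $r-1\in Z$: $\sigma_{r-1}(\pm\Phi_{r,Z})=\pm\Psi_{r,Z\setminus\{r-1\}}$ and $\sigma_r(\pm\Phi_{r,Z})=\pm\Psi'_{r,Z\setminus\{r-1\}}$; if $r-1\notin Y$: $\sigma_{r-1}(\pm\Psi_{r,Y})=\pm\Phi_{r,Y\cup\{r-1\}}$, $\sigma_r(\pm\Psi_{r,Y})=\pm\Psi_{r,Y}$, $\sigma_r(\pm\Psi'_{r,Y})=\pm\Phi_{r,Y\cup\{r-1\}}$, $\sigma_{r-1}(\pm\Psi'_{r,Y})=\pm\Psi'_{r,Y}$; if $r-1\in Y$: $\sigma_{r-1}(\pm\Psi_{r,Y})=\sigma_r(\pm\Psi_{r,Y})=\pm\Psi_{r,Y}$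 and $\sigma_{r-1}(\pm\Psi'_{r,Y})=\sigma_r(\pm\Psi'_{r,Y})=\pm\Psi'_{r,Y}$.
   Context: In $\mathbb{Z}^r$ with standard basis $\alpha_1,\dots,\alpha_r$ let $\eta_{i,j}=\sum_{k=i}^j\alpha_k$ for $i\le j$, $\eta_{i,j}=0$ for $i>j$. $\Phi_{r,Z}$ ($Z\subseteq\{1,\dots,r-1\}$) consists of $\eta_{i,j-1}$ ($1\le i<j\le r$), $\eta_{i,r-2}+\alpha_r$ ($1\le i<r$), $\eta_{i,r}+\eta_{j,r-2}$ ($1\le i<j<r$), $\eta_{j,r}+\eta_{j,r-2}$ ($j\in Z$). $\Psi_{r,Y}$ consists of $\eta_{i,j}$ ($1\le i\le j\le r$), $\eta_{i,r}+\eta_{j,r-1}$ ($1\le i<j<r$), $\eta_{j,r}+\eta_{j,r-1}$ ($j\in Y$). $\Psi'_{r,Y}$ is obtained from $\Psi_{r,Y}$ by exchanging the coordinates of $\alpha_{r-1}$ and $\alpha_r$. For finite $\Lambda\subseteq\mathbb{Z}^r$, $C_\Lambda=(c_{ij})$ with $c_{ii}=2$, $c_{ij}=-\max\{k\ge0:k\alpha_i+\alpha_j\in\Lambda\}$ ($i\ne j$), and $\sigma_i:\mathbb{Z}^r\to\mathbb{Z}^r$, $\sigma_i(\alpha_j)=\alpha_j-c_{ij}\alpha_i$. *)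

theory Defs
  imports Main "HOL-Library.Function_Algebras"
begin

text \<open>Vectors of Z^r are modelled as functions nat => int; the coordinate
  of alpha_k is the value at k (k = 1..r); all vectors considered vanish outside 1..r.\<close>

type_synonym vec = "nat \<Rightarrow> int"

definition alpha :: "nat \<Rightarrow> vec" where
  "alpha i = (\<lambda>k. if k = i then 1 else 0)"

definition eta :: "nat \<Rightarrow> nat \<Rightarrow> vec" where
  "eta i j = (\<lambda>n. \<Sum>k\<in>{i..j}. alpha k n)"

definition PhiS :: "nat \<Rightarrow> nat set \<Rightarrow> vec set" where
  "PhiS r Z =
     {eta i (j - 1) | i j. 1 \<le> i \<and> i < j \<and> j \<le> r}
   \<union> {eta i (r - 2) + alpha r | i. 1 \<le> i \<and> i < r}
   \<union> {eta i r + eta j (r - 2) | i j. 1 \<le> i \<and> i < j \<and> j < r}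
   \<union> {eta j r + eta j (r - 2) | j. j \<in> Z}"

definition PsiS :: "nat \<Rightarrow> nat set \<Rightarrow> vec set" where
  "PsiS r Y =
     {eta i j | i j. 1 \<le> i \<and> i \<le> j \<and> j \<le> r}
   \<union> {eta i r + eta j (r - 1) | i j. 1 \<le> i \<and> i < j \<and> j < r}
   \<union> {eta j r + eta j (r - 1) | j. j \<in> Y}"

definition swapc :: "nat \<Rightarrow> vec \<Rightarrow> vec" where
  "swapc r v = (\<lambda>k. if k = r - 1 then v r else if k = r then v (r - 1) else v k)"

definition PsiS' :: "nat \<Rightarrow> nat set \<Rightarrow> vec set" where
  "PsiS' r Y = swapc r ` PsiS r Y"

definition cartan :: "vec set \<Rightarrow> nat \<Rightarrow> nat \<Rightarrow> int" where
  "cartan L i j = (if i = j then 2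
     else - int (Max {k::nat. of_nat k * alpha i + alpha j \<in> L}))"

definition sigma :: "nat \<Rightarrow> vec set \<Rightarrow> nat \<Rightarrow> vec \<Rightarrow> vec" where
  "sigma r L i v = v - (\<lambda>_. \<Sum>j\<in>{1..r}. cartan L i j * v j) * alpha i"

definition pm :: "vec set \<Rightarrow> vec set" where
  "pm L = L \<union> uminus ` L"

definition sigma_pm :: "nat \<Rightarrow> vec set \<Rightarrow> nat \<Rightarrow> vec set" where
  "sigma_pm r L i = sigma r L i ` pm L"

definition transp_set :: "nat \<Rightarrow> nat set \<Rightarrow> nat set" where
  "transp_set i A = (\<lambda>k. if k = i then i + 1 else if k = i + 1 then i else k) ` A"

end

theory Submission
  imports Defs
begin


lemma alpha_apply[simp]: "alpha i n = (if n = i then 1 else 0)"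
  by (simp add: alpha_def)

lemma eta_apply[simp]: "eta i j n = (if i \<le> n \<and> n \<le> j then 1 else 0)"
  by (simp add: eta_def)

lemma uminus_vec_apply[simp]: "(- (v::vec)) n = - v n"
  by simp
lemma minus_vec_apply[simp]: "((v::vec) - w) n = v n - w n"
  by simp

lemma pmI1: "v \<in> L \<Longrightarrow> v \<in> pm L" by (simp add: pm_def)
lemma pmI2: "- v \<in> L \<Longrightarrow> v \<in> pm L" unfolding pm_def
  by (metis UnI2 image_eqI minus_minus)

lemma sigma_apply: "sigma r L i v n = (if n = i then v i - (\<Sum>j\<in>{1..r}. cartan L i j * v j) else v n)"
  by (simp add: sigma_def)

lemma transp_mem[simp]: "x \<in> transp_set i Y \<longleftrightarrow> (if x = i then i+1 else if x = i+1 then i else x) \<in> Y"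
  unfolding transp_set_def by (auto simp: image_iff split: if_splits) 




lemma PsiS_E:
  assumes "v \<in> PsiS r Y"
  obtains a b where "1\<le>a" "a\<le>b" "b\<le>r" "v = eta a b"
  | a c where "1\<le>a" "a<c" "c<r" "v = eta a r + eta c (r-1)"
  | c where "c\<in>Y" "v = eta c r + eta c (r-1)"
  using assms unfolding PsiS_def by blast

lemma PhiS_E:
  assumes "v \<in> PhiS r Z"
  obtains a b where "1\<le>a" "a\<le>b" "b<r" "v = eta a b"
  | a where "1\<le>a" "a<r" "v = eta a (r-2) + alpha r"
  | a c where "1\<le>a" "a<c" "c<r" "v = eta a r + eta c (r-2)"
  | c where "c\<in>Z" "v = eta c r + eta c (r-2)"
proof -
  from assms consider (1) i j where "1 \<le> i" "i < j" "j \<le> r" "v = eta i (j-1)"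
    | (2) a where "1\<le>a" "a<r" "v = eta a (r-2) + alpha r"
    | (3) a c where "1\<le>a" "a<c" "c<r" "v = eta a r + eta c (r-2)"
    | (4) c where "c\<in>Z" "v = eta c r + eta c (r-2)"
    unfolding PhiS_def by blast
  then show ?thesis
  proof cases
    case (1 i j) then show ?thesis using that(1)[of i "j-1"] by auto
  qed (use that in auto)
qed

lemma P1I: "1\<le>a \<Longrightarrow> a\<le>b \<Longrightarrow> b\<le>r \<Longrightarrow> (\<And>n. v n = (if a\<le>n\<and>n\<le>b then 1 else 0)) \<Longrightarrow> v \<in> PsiS r Y"
proof - assume h: "1\<le>a" "a\<le>b" "b\<le>r" "\<And>n. v n = (if a\<le>n\<and>n\<le>b then 1 else 0)"
  then have "v = eta a b" by (intro ext) simp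
  then show ?thesis unfolding PsiS_def using h by blast qed
lemma P2I: "1\<le>a \<Longrightarrow> a<c \<Longrightarrow> c<r \<Longrightarrow> (\<And>n. v n = (if a\<le>n\<and>n\<le>r then 1 else 0) + (if c\<le>n\<and>n\<le>r-1 then 1 else 0)) \<Longrightarrow> v \<in> PsiS r Y"
proof - assume h: "1\<le>a" "a<c" "c<r" "\<And>n. v n = (if a\<le>n\<and>n\<le>r then 1 else 0) + (if c\<le>n\<and>n\<le>r-1 then 1 else 0)"
  then have "v = eta a r + eta c (r-1)" by (intro ext) simp
  then show ?thesis unfolding PsiS_def using h by blast qed
lemma P3I: "c \<in> Y \<Longrightarrow> (\<And>n. v n = (if c\<le>n\<and>n\<le>r then 1 else 0) + (if c\<le>n\<and>n\<le>r-1 then 1 else 0)) \<Longrightarrow> v \<in> PsiS r Y"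
proof - assume h: "c \<in> Y" "\<And>n. v n = (if c\<le>n\<and>n\<le>r then 1 else 0) + (if c\<le>n\<and>n\<le>r-1 then 1 else 0)"
  then have "v = eta c r + eta c (r-1)" by (intro ext) simp
  then show ?thesis unfolding PsiS_def using h by blast qed

lemma F1I: "1\<le>a \<Longrightarrow> a\<le>b \<Longrightarrow> b<r \<Longrightarrow> (\<And>n. v n = (if a\<le>n\<and>n\<le>b then 1 else 0)) \<Longrightarrow> v \<in> PhiS r Z"
proof - assume h: "1\<le>a" "a\<le>b" "b<r" "\<And>n. v n = (if a\<le>n\<and>n\<le>b then 1 else 0)"
  then have "v = eta a (b+1-1)" by (intro ext) simp
  moreover have "a < b+1" "b+1 \<le> r" using h by auto
  ultimately show ?thesis unfolding PhiS_def using h by blast qed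
lemma F2I: "1\<le>a \<Longrightarrow> a<r \<Longrightarrow> (\<And>n. v n = (if a\<le>n\<and>n\<le>r-2 then 1 else 0) + (if n = r then 1 else 0)) \<Longrightarrow> v \<in> PhiS r Z"
proof - assume h: "1\<le>a" "a<r" "\<And>n. v n = (if a\<le>n\<and>n\<le>r-2 then 1 else 0) + (if n = r then 1 else 0)"
  then have "v = eta a (r-2) + alpha r" by (intro ext) simp
  then show ?thesis unfolding PhiS_def using h by blast qed
lemma F3I: "1\<le>a \<Longrightarrow> a<c \<Longrightarrow> c<r \<Longrightarrow> (\<And>n. v n = (if a\<le>n\<and>n\<le>r then 1 else 0) + (if c\<le>n\<and>n\<le>r-2 then 1 else 0)) \<Longrightarrow> v \<in> PhiS r Z"
proof - assume h: "1\<le>a" "a<c" "c<r" "\<And>n. v n = (if a\<le>n\<and>n\<le>r then 1 else 0) + (if c\<le>n\<and>n\<le>r-2 then 1 else 0)"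
  then have "v = eta a r + eta c (r-2)" by (intro ext) simp
  then show ?thesis unfolding PhiS_def using h by blast qed
lemma F4I: "c \<in> Z \<Longrightarrow> (\<And>n. v n = (if c\<le>n\<and>n\<le>r then 1 else 0) + (if c\<le>n\<and>n\<le>r-2 then 1 else 0)) \<Longrightarrow> v \<in> PhiS r Z"
proof - assume h: "c \<in> Z" "\<And>n. v n = (if c\<le>n\<and>n\<le>r then 1 else 0) + (if c\<le>n\<and>n\<le>r-2 then 1 else 0)"
  then have "v = eta c r + eta c (r-2)" by (intro ext) simp
  then show ?thesis unfolding PhiS_def using h by blast qed

lemma times_alpha[simp]: "(of_nat k * alpha i :: vec) n = (if n = i then int k else 0)"
  by simp

lemma kvec_apply: "(of_nat k * alpha i + alpha j :: vec) n = (if n = i then int k else 0) + (if n = j then 1 else 0)"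
  by simp

lemma Psi_test:
  assumes "i\<noteq>j" "1\<le>i" "i\<le>r" "1\<le>j" "j\<le>r" "Y\<subseteq>{1..r-1}" "r\<ge>3"
  shows "of_nat k * alpha i + alpha j \<in> PsiS r Y \<longleftrightarrow>
     k = 0 \<or> (k=1 \<and> (j=i+1 \<or> i=j+1)) \<or> (k=2 \<and> i = r-1 \<and> j = r \<and> r-1 \<in> Y)"
proof
  assume "of_nat k * alpha i + alpha j \<in> PsiS r Y"
  then show "k = 0 \<or> (k=1 \<and> (j=i+1 \<or> i=j+1)) \<or> (k=2 \<and> i = r-1 \<and> j = r \<and> r-1 \<in> Y)"
  proof (cases rule: PsiS_E)
    case (1 a b)
    then have e: "\<And>n. (if n = i then int k else 0) + (if n = j then 1 else 0) = (if a\<le>n\<and>n\<le>b then 1 else 0)"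
    proof - fix n show "(if n = i then int k else 0) + (if n = j then 1 else 0) = (if a\<le>n\<and>n\<le>b then 1 else 0)" using fun_cong[OF 1(4), of n] by (simp only: times_alpha eta_apply plus_fun_apply alpha_apply) qed
    have "k = 0 \<or> (k=1 \<and> (j=i+1 \<or> i=j+1))"
      using e[of i] e[of j] e[of "i+1"] e[of "j+1"] assms(1) by (auto split: if_splits)
    then show ?thesis by blast
  next
    case (2 a c)
    then have e: "\<And>n. (if n = i then int k else 0) + (if n = j then 1 else 0) = (if a\<le>n\<and>n\<le>r then 1 else 0) + (if c\<le>n\<and>n\<le>r-1 then 1 else 0)"
    proof - fix n show "(if n = i then int k else 0) + (if n = j then 1 else 0) = (if a\<le>n\<and>n\<le>r then 1 else 0) + (if c\<le>n\<and>n\<le>r-1 then 1 else 0)" using fun_cong[OF 2(4), of n] by (simp only: times_alpha eta_apply plus_fun_apply alpha_apply) qed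
    have False using e[of a] e[of "r-1"] e[of r] 2(1-3) by (auto split: if_splits)
    then show ?thesis by blast
  next
    case (3 c)
    then have e: "\<And>n. (if n = i then int k else 0) + (if n = j then 1 else 0) = (if c\<le>n\<and>n\<le>r then 1 else 0) + (if c\<le>n\<and>n\<le>r-1 then 1 else 0)"
    proof - fix n show "(if n = i then int k else 0) + (if n = j then 1 else 0) = (if c\<le>n\<and>n\<le>r then 1 else 0) + (if c\<le>n\<and>n\<le>r-1 then 1 else 0)" using fun_cong[OF 3(2), of n] by (simp only: times_alpha eta_apply plus_fun_apply alpha_apply) qed
    have "1 \<le> c" "c \<le> r - 1" using 3 assms by auto
    then have "k=2 \<and> i = r-1 \<and> j = r \<and> c = r-1" using e[of i] e[of j] e[of c] e[of r] e[of "r-1"] assms(1)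
      by (auto split: if_splits)
    then show ?thesis using 3 by auto
  qed
next
  assume "k = 0 \<or> (k=1 \<and> (j=i+1 \<or> i=j+1)) \<or> (k=2 \<and> i = r-1 \<and> j = r \<and> r-1 \<in> Y)"
  then consider "k=0" | "k=1" "j=i+1" | "k=1" "i=j+1" | "k=2" "i=r-1" "j=r" "r-1\<in>Y" by blast
  then show "of_nat k * alpha i + alpha j \<in> PsiS r Y"
  proof cases
    case 1 then show ?thesis using assms(1-5,7) by (intro P1I[of j j]) (auto simp: kvec_apply)
  next
    case 2 then show ?thesis using assms(1-5,7) by (intro P1I[of i j]) (auto simp: kvec_apply)
  next
    case 3 then show ?thesis using assms(1-5,7) by (intro P1I[of j i]) (auto simp: kvec_apply)
  next
    case 4 then show ?thesis using assms(1-5,7) by (intro P3I[of "r-1"]) (auto simp: kvec_apply)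
  qed
qed

definition phiadj :: "nat \<Rightarrow> nat set \<Rightarrow> nat \<Rightarrow> nat \<Rightarrow> bool" where
  "phiadj r Z i j \<longleftrightarrow> (j=i+1 \<and> j<r) \<or> (i=j+1 \<and> i<r) \<or> (i=r-2 \<and> j=r) \<or> (j=r-2 \<and> i=r)
     \<or> (r-1\<in>Z \<and> ((i=r-1 \<and> j=r) \<or> (j=r-1 \<and> i=r)))"

lemma Phi_test:
  assumes "i\<noteq>j" "1\<le>i" "i\<le>r" "1\<le>j" "j\<le>r" "Z\<subseteq>{1..r-1}" "r\<ge>3"
  shows "of_nat k * alpha i + alpha j \<in> PhiS r Z \<longleftrightarrow> k = 0 \<or> (k=1 \<and> phiadj r Z i j)"
proof
  assume "of_nat k * alpha i + alpha j \<in> PhiS r Z"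
  then show "k = 0 \<or> (k=1 \<and> phiadj r Z i j)"
  proof (cases rule: PhiS_E)
    case (1 a b)
    then have e: "\<And>n. (if n = i then int k else 0) + (if n = j then 1 else 0) = (if a\<le>n\<and>n\<le>b then 1 else 0)"
    proof - fix n show "(if n = i then int k else 0) + (if n = j then 1 else 0) = (if a\<le>n\<and>n\<le>b then 1 else 0)" using fun_cong[OF 1(4), of n] by (simp only: times_alpha eta_apply plus_fun_apply alpha_apply) qed
    have "k = 0 \<or> (k=1 \<and> ((j=i+1 \<and> j<r) \<or> (i=j+1 \<and> i<r)))"
      using e[of i] e[of j] e[of "i+1"] e[of "j+1"] assms(1) 1(1-3) by (auto split: if_splits)
    then show ?thesis unfolding phiadj_def by blast
  next
    case (2 a)
    then have e: "\<And>n. (if n = i then int k else 0) + (if n = j then 1 else 0) = (if a\<le>n\<and>n\<le>r-2 then 1 else 0) + (if n = r then 1 else 0)"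
    proof - fix n show "(if n = i then int k else 0) + (if n = j then 1 else 0) = (if a\<le>n\<and>n\<le>r-2 then 1 else 0) + (if n = r then 1 else 0)" using fun_cong[OF 2(3), of n] by (simp only: times_alpha eta_apply plus_fun_apply alpha_apply) qed
    have "k = 0 \<or> (k=1 \<and> ((i=r-2 \<and> j=r) \<or> (j=r-2 \<and> i=r)))"
      using e[of i] e[of j] e[of r] e[of a] e[of "a+1"] e[of "r-2"] assms(1,7) 2(1,2) by (auto split: if_splits)
    then show ?thesis unfolding phiadj_def by blast
  next
    case (3 a c)
    then have e: "\<And>n. (if n = i then int k else 0) + (if n = j then 1 else 0) = (if a\<le>n\<and>n\<le>r then 1 else 0) + (if c\<le>n\<and>n\<le>r-2 then 1 else 0)"
    proof - fix n show "(if n = i then int k else 0) + (if n = j then 1 else 0) = (if a\<le>n\<and>n\<le>r then 1 else 0) + (if c\<le>n\<and>n\<le>r-2 then 1 else 0)" using fun_cong[OF 3(4), of n] by (simp only: times_alpha eta_apply plus_fun_apply alpha_apply) qed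
    have False using e[of a] e[of "r-1"] e[of r] 3(1-3) by (auto split: if_splits)
    then show ?thesis by blast
  next
    case (4 c)
    then have e: "\<And>n. (if n = i then int k else 0) + (if n = j then 1 else 0) = (if c\<le>n\<and>n\<le>r then 1 else 0) + (if c\<le>n\<and>n\<le>r-2 then 1 else 0)"
    proof - fix n show "(if n = i then int k else 0) + (if n = j then 1 else 0) = (if c\<le>n\<and>n\<le>r then 1 else 0) + (if c\<le>n\<and>n\<le>r-2 then 1 else 0)" using fun_cong[OF 4(2), of n] by (simp only: times_alpha eta_apply plus_fun_apply alpha_apply) qed
    have "1 \<le> c" "c \<le> r - 1" using 4 assms by auto
    then have "k=1 \<and> c = r-1 \<and> ((i=r-1 \<and> j=r) \<or> (j=r-1 \<and> i=r))" using e[of i] e[of j] e[of c] e[of r] e[of "r-1"] assms(1)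
      by (auto split: if_splits)
    then show ?thesis using 4 unfolding phiadj_def by auto
  qed
next
  assume kk: "k = 0 \<or> (k=1 \<and> phiadj r Z i j)"
  have jj: "j < r \<or> j = r" using assms(5) by linarith
  from kk consider "k=0" "j<r" | "k=0" "j=r" | "k=1" "j=i+1" "j<r" | "k=1" "i=j+1" "i<r" | "k=1" "i=r-2" "j=r"
    | "k=1" "j=r-2" "i=r" | "k=1" "r-1\<in>Z" "i=r-1" "j=r" | "k=1" "r-1\<in>Z" "j=r-1" "i=r"
    unfolding phiadj_def using jj by blast
  then show "of_nat k * alpha i + alpha j \<in> PhiS r Z"
  proof cases
    case 1 then show ?thesis using assms(1-5,7) by (intro F1I[of j j]) (auto simp: kvec_apply)
  next
    case 2 then show ?thesis using assms(1-5,7) by (intro F2I[of "r-1"]) (auto simp: kvec_apply)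
  next
    case 3 then show ?thesis using assms(1-5,7) by (intro F1I[of i j]) (auto simp: kvec_apply)
  next
    case 4 then show ?thesis using assms(1-5,7) by (intro F1I[of j i]) (auto simp: kvec_apply)
  next
    case 5 then show ?thesis using assms(1-5,7) by (intro F2I[of "r-2"]) (auto simp: kvec_apply)
  next
    case 6 then show ?thesis using assms(1-5,7) by (intro F2I[of "r-2"]) (auto simp: kvec_apply)
  next
    case 7 then show ?thesis using assms(1-5,7) by (intro F4I[of "r-1"]) (auto simp: kvec_apply)
  next
    case 8 then show ?thesis using assms(1-5,7) by (intro F4I[of "r-1"]) (auto simp: kvec_apply)
  qed
qed

lemma cartan_val:
  assumes "i \<noteq> j" "\<And>k. of_nat k * alpha i + alpha j \<in> L \<longleftrightarrow> k \<le> m"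
  shows "cartan L i j = - int m"
proof -
  have "{k::nat. of_nat k * alpha i + alpha j \<in> L} = {..m}" using assms(2) by auto
  moreover have "Max {..m} = m" by (rule Max_eqI) auto
  ultimately show ?thesis using assms(1) by (simp add: cartan_def)
qed

lemma cartan_Psi:
  assumes "1\<le>i" "i\<le>r" "1\<le>j" "j\<le>r" "Y\<subseteq>{1..r-1}" "r\<ge>3"
  shows "cartan (PsiS r Y) i j = (if i = j then 2 else
     - (if i=r-1 \<and> j=r \<and> r-1\<in>Y then 2 else if j=i+1 \<or> i=j+1 then 1 else 0))"
proof (cases "i = j")
  case True then show ?thesis by (simp add: cartan_def)
next
  case False
  show ?thesis using False
    by (subst cartan_val[OF False, where m="if i=r-1 \<and> j=r \<and> r-1\<in>Y then 2 else if j=i+1 \<or> i=j+1 then 1 else 0"])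
       (auto simp: Psi_test[OF False assms])
qed

lemma cartan_Phi:
  assumes "1\<le>i" "i\<le>r" "1\<le>j" "j\<le>r" "Z\<subseteq>{1..r-1}" "r\<ge>3"
  shows "cartan (PhiS r Z) i j = (if i = j then 2 else - (if phiadj r Z i j then 1 else 0))"
proof (cases "i = j")
  case True then show ?thesis by (simp add: cartan_def)
next
  case False
  show ?thesis using False
    by (subst cartan_val[OF False, where m="if phiadj r Z i j then 1 else 0"])
       (auto simp: Phi_test[OF False assms])
qed




lemma row_sum:
  assumes "\<And>j. 1\<le>j \<Longrightarrow> j\<le>r \<Longrightarrow> c j = (if j = i then 2 else 0) - (if j = p then x else 0) - (if j = q then y else 0) - (if j = s then z else 0)"
  shows "(\<Sum>j\<in>{1..r}. c j * (v::vec) j) = (if i\<in>{1..r} then 2 * v i else 0) - (if p\<in>{1..r} then x * v p else 0)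
      - (if q \<in> {1..r} then y * v q else 0) - (if s\<in>{1..r} then z * v s else 0)"
proof -
  have "(\<Sum>j\<in>{1..r}. c j * v j) = (\<Sum>j\<in>{1..r}. (if j = i then 2 * v i else 0) - (if j = p then x * v p else 0)
      - (if j = q then y * v q else 0) - (if j = s then z * v s else 0))"
    by (rule sum.cong) (simp_all add: assms left_diff_distrib)
  also have "\<dots> = (if i\<in>{1..r} then 2 * v i else 0) - (if p\<in>{1..r} then x * v p else 0)
      - (if q \<in> {1..r} then y * v q else 0) - (if s\<in>{1..r} then z * v s else 0)"
    by (simp only: sum_subtractf sum.delta finite_atLeastAtMost)
  finally show ?thesis .
qed

lemma sig_Psi_low:
  assumes "1\<le>i" "i+2\<le>r" "Y\<subseteq>{1..r-1}" "r\<ge>3"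
  shows "sigma r (PsiS r Y) i v = (\<lambda>n. if n = i then (if 2\<le>i then v (i-1) else 0) + v (i+1) - v i else v n)"
proof -
  have "(\<Sum>j\<in>{1..r}. cartan (PsiS r Y) i j * v j) = (if i\<in>{1..r} then 2 * v i else 0) - (if i+1\<in>{1..r} then 1 * v (i+1) else 0)
      - (if i-1 \<in> {1..r} then 1 * v (i-1) else 0) - (if i\<in>{1..r} then 0 * v i else 0)"
  proof (rule row_sum)
    fix j assume j: "1 \<le> j" "j \<le> r"
    have c: "cartan (PsiS r Y) i j = (if i = j then 2 else
     - (if i=r-1 \<and> j=r \<and> r-1\<in>Y then 2 else if j=i+1 \<or> i=j+1 then 1 else 0))"
      by (rule cartan_Psi) (use assms j in simp_all)
    have f: "i \<noteq> r-1" "(j = i - 1) = (i = j+1)" using assms j by auto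
    show "cartan (PsiS r Y) i j = (if j = i then 2 else 0) - (if j = i+1 then 1 else 0) - (if j = i-1 then 1 else 0) - (if j = i then 0 else 0)"
      unfolding c using f by simp
  qed
  also have "\<dots> = 2 * v i - v (i+1) - (if 2\<le>i then v (i-1) else 0)"
  proof -
    have "i\<in>{1..r}" "i+1\<in>{1..r}" "(i-1 \<in> {1..r}) = (2\<le>i)" using assms by auto
    then show ?thesis by simp
  qed
  finally have S: "(\<Sum>j\<in>{1..r}. cartan (PsiS r Y) i j * v j) = 2 * v i - v (i+1) - (if 2\<le>i then v (i-1) else 0)" .
  show ?thesis by (rule ext) (simp only: sigma_apply S, simp)
qed

lemma sig_Psi_rm1:
  assumes "Y\<subseteq>{1..r-1}" "r\<ge>3"
  shows "sigma r (PsiS r Y) (r-1) v = (\<lambda>n. if n = r-1 then v (r-2) + (if r-1\<in>Y then 2 else 1) * v r - v (r-1) else v n)"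
proof -
  obtain q where q: "r = q + 2" using assms(2) by (metis add.commute le_add_diff_inverse2 le_trans numeral_le_iff semiring_norm(72) semiring_norm(74) nat_le_linear)
  have "(\<Sum>j\<in>{1..r}. cartan (PsiS r Y) (r-1) j * v j) = (if r-1\<in>{1..r} then 2 * v (r-1) else 0) - (if r\<in>{1..r} then (if r-1\<in>Y then 2 else 1) * v r else 0)
      - (if r-2 \<in> {1..r} then 1 * v (r-2) else 0) - (if r\<in>{1..r} then 0 * v r else 0)"
  proof (rule row_sum)
    fix j assume j: "1 \<le> j" "j \<le> r"
    have c: "cartan (PsiS r Y) (r-1) j = (if r-1 = j then 2 else
     - (if r-1=r-1 \<and> j=r \<and> r-1\<in>Y then 2 else if j=r-1+1 \<or> r-1=j+1 then 1 else 0))"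
      by (rule cartan_Psi) (use assms j in simp_all)
    show "cartan (PsiS r Y) (r-1) j = (if j = r-1 then 2 else 0) - (if j = r then (if r-1\<in>Y then 2 else 1) else 0) - (if j = r-2 then 1 else 0) - (if j = r then 0 else 0)"
      unfolding c using j unfolding q by auto
  qed
  also have "\<dots> = 2 * v (r-1) - (if r-1\<in>Y then 2 else 1) * v r - v (r-2)" using assms unfolding q by simp
  finally have S: "(\<Sum>j\<in>{1..r}. cartan (PsiS r Y) (r-1) j * v j) = 2 * v (r-1) - (if r-1\<in>Y then 2 else 1) * v r - v (r-2)" .
  show ?thesis by (rule ext) (simp only: sigma_apply S, simp)
qed

lemma sig_Psi_r:
  assumes "Y\<subseteq>{1..r-1}" "r\<ge>3"
  shows "sigma r (PsiS r Y) r v = (\<lambda>n. if n = r then v (r-1) - v r else v n)"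
proof -
  obtain q where q: "r = q + 2" using assms(2) by (metis add.commute le_add_diff_inverse2 le_trans numeral_le_iff semiring_norm(72) semiring_norm(74) nat_le_linear)
  have "(\<Sum>j\<in>{1..r}. cartan (PsiS r Y) r j * v j) = (if r\<in>{1..r} then 2 * v r else 0) - (if r-1\<in>{1..r} then 1 * v (r-1) else 0)
      - (if r \<in> {1..r} then 0 * v r else 0) - (if r\<in>{1..r} then 0 * v r else 0)"
  proof (rule row_sum)
    fix j assume j: "1 \<le> j" "j \<le> r"
    have c: "cartan (PsiS r Y) r j = (if r = j then 2 else
     - (if r=r-1 \<and> j=r \<and> r-1\<in>Y then 2 else if j=r+1 \<or> r=j+1 then 1 else 0))"
      by (rule cartan_Psi) (use assms j in simp_all)
    show "cartan (PsiS r Y) r j = (if j = r then 2 else 0) - (if j = r-1 then 1 else 0) - (if j = r then 0 else 0) - (if j = r then 0 else 0)"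
      unfolding c using j unfolding q by auto
  qed
  also have "\<dots> = 2 * v r - v (r-1)" using assms unfolding q by simp
  finally have S: "(\<Sum>j\<in>{1..r}. cartan (PsiS r Y) r j * v j) = 2 * v r - v (r-1)" .
  show ?thesis by (rule ext) (simp only: sigma_apply S, simp)
qed

lemma sig_Phi_low:
  assumes "1\<le>i" "i+3\<le>r" "Z\<subseteq>{1..r-1}" "r\<ge>3"
  shows "sigma r (PhiS r Z) i v = (\<lambda>n. if n = i then (if 2\<le>i then v (i-1) else 0) + v (i+1) - v i else v n)"
proof -
  have "(\<Sum>j\<in>{1..r}. cartan (PhiS r Z) i j * v j) = (if i\<in>{1..r} then 2 * v i else 0) - (if i+1\<in>{1..r} then 1 * v (i+1) else 0)
      - (if i-1 \<in> {1..r} then 1 * v (i-1) else 0) - (if i\<in>{1..r} then 0 * v i else 0)"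
  proof (rule row_sum)
    fix j assume j: "1 \<le> j" "j \<le> r"
    have c: "cartan (PhiS r Z) i j = (if i = j then 2 else - (if phiadj r Z i j then 1 else 0))"
      by (rule cartan_Phi) (use assms j in simp_all)
    have f: "phiadj r Z i j = (j = i+1 \<or> i = j+1)" "(j = i - 1) = (i = j+1)" using assms j by (auto simp: phiadj_def)
    show "cartan (PhiS r Z) i j = (if j = i then 2 else 0) - (if j = i+1 then 1 else 0) - (if j = i-1 then 1 else 0) - (if j = i then 0 else 0)"
      unfolding c using f by simp
  qed
  also have "\<dots> = 2 * v i - v (i+1) - (if 2\<le>i then v (i-1) else 0)"
  proof -
    have "i\<in>{1..r}" "i+1\<in>{1..r}" "(i-1 \<in> {1..r}) = (2\<le>i)" using assms by auto
    then show ?thesis by simp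
  qed
  finally have S: "(\<Sum>j\<in>{1..r}. cartan (PhiS r Z) i j * v j) = 2 * v i - v (i+1) - (if 2\<le>i then v (i-1) else 0)" .
  show ?thesis by (rule ext) (simp only: sigma_apply S, simp)
qed

lemma sig_Phi_rm2:
  assumes "Z\<subseteq>{1..r-1}" "r\<ge>3"
  shows "sigma r (PhiS r Z) (r-2) v = (\<lambda>n. if n = r-2 then (if 4\<le>r then v (r-3) else 0) + v (r-1) + v r - v (r-2) else v n)"
proof -
  obtain q where q: "r = q + 3" using assms(2) by (metis add.commute le_add_diff_inverse2)
  have "(\<Sum>j\<in>{1..r}. cartan (PhiS r Z) (r-2) j * v j) = (if r-2\<in>{1..r} then 2 * v (r-2) else 0) - (if r-1\<in>{1..r} then 1 * v (r-1) else 0)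
      - (if r-3 \<in> {1..r} then 1 * v (r-3) else 0) - (if r\<in>{1..r} then 1 * v r else 0)"
  proof (rule row_sum)
    fix j assume j: "1 \<le> j" "j \<le> r"
    have c: "cartan (PhiS r Z) (r-2) j = (if r-2 = j then 2 else - (if phiadj r Z (r-2) j then 1 else 0))"
      by (rule cartan_Phi) (use assms j in simp_all)
    have f: "phiadj r Z (r-2) j = (j = r-1 \<or> j = r-3 \<or> j = r)" using assms j unfolding q by (auto simp: phiadj_def)
    show "cartan (PhiS r Z) (r-2) j = (if j = r-2 then 2 else 0) - (if j = r-1 then 1 else 0) - (if j = r-3 then 1 else 0) - (if j = r then 1 else 0)"
      unfolding c f using j unfolding q by auto
  qed
  also have "\<dots> = 2 * v (r-2) - v (r-1) - (if 4\<le>r then v (r-3) else 0) - v r" using assms unfolding q by simp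
  finally have S: "(\<Sum>j\<in>{1..r}. cartan (PhiS r Z) (r-2) j * v j) = 2 * v (r-2) - v (r-1) - (if 4\<le>r then v (r-3) else 0) - v r" .
  show ?thesis by (rule ext) (simp only: sigma_apply S, simp)
qed

lemma sig_Phi_rm1:
  assumes "Z\<subseteq>{1..r-1}" "r\<ge>3"
  shows "sigma r (PhiS r Z) (r-1) v = (\<lambda>n. if n = r-1 then v (r-2) + (if r-1\<in>Z then v r else 0) - v (r-1) else v n)"
proof -
  obtain q where q: "r = q + 3" using assms(2) by (metis add.commute le_add_diff_inverse2)
  have "(\<Sum>j\<in>{1..r}. cartan (PhiS r Z) (r-1) j * v j) = (if r-1\<in>{1..r} then 2 * v (r-1) else 0) - (if r\<in>{1..r} then (if r-1\<in>Z then 1 else 0) * v r else 0)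
      - (if r-2 \<in> {1..r} then 1 * v (r-2) else 0) - (if r\<in>{1..r} then 0 * v r else 0)"
  proof (rule row_sum)
    fix j assume j: "1 \<le> j" "j \<le> r"
    have c: "cartan (PhiS r Z) (r-1) j = (if r-1 = j then 2 else - (if phiadj r Z (r-1) j then 1 else 0))"
      by (rule cartan_Phi) (use assms j in simp_all)
    have f: "phiadj r Z (r-1) j = (j = r-2 \<or> (j = r \<and> r-1\<in>Z))" using assms j unfolding q by (auto simp: phiadj_def)
    show "cartan (PhiS r Z) (r-1) j = (if j = r-1 then 2 else 0) - (if j = r then (if r-1\<in>Z then 1 else 0) else 0) - (if j = r-2 then 1 else 0) - (if j = r then 0 else 0)"
      unfolding c f using j unfolding q by auto
  qed
  also have "\<dots> = 2 * v (r-1) - (if r-1\<in>Z then v r else 0) - v (r-2)" using assms unfolding q by simp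
  finally have S: "(\<Sum>j\<in>{1..r}. cartan (PhiS r Z) (r-1) j * v j) = 2 * v (r-1) - (if r-1\<in>Z then v r else 0) - v (r-2)" .
  show ?thesis by (rule ext) (simp only: sigma_apply S, simp)
qed




lemma inc_Psi_low:
  assumes v: "v \<in> PsiS r Y" and "h+3 \<le> r" and Y: "Y \<subseteq> {1..r-1}"
  shows "(\<lambda>n. if n = h+1 then (if 1\<le>h then v h else 0) + v (h+2) - v (h+1) else v n) \<in> pm (PsiS r (transp_set (h+1) Y))"
  using v
proof (cases rule: PsiS_E)
  case (1 a b)
  note ab = 1
  consider "a = h+2" | "b = h" | "a = h+1" "b = h+1" | "a = h+1" "h+1 < b" | "a < h+1" "b = h+1"
    | "h+2 < a \<or> b < h \<or> (a \<le> h \<and> h+2 \<le> b)" using ab by linarith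
  then show ?thesis
  proof cases
    case 1 then show ?thesis using ab assms(2) by (intro pmI1 P1I[of "h+1" b]) auto
  next
    case 2 then show ?thesis using ab assms(2) by (intro pmI1 P1I[of a "h+1"]) auto
  next
    case 3 then show ?thesis using ab assms(2) by (intro pmI2 P1I[of "h+1" "h+1"]) auto
  next
    case 4 then show ?thesis using ab assms(2) by (intro pmI1 P1I[of "h+2" b]) auto
  next
    case 5 then show ?thesis using ab assms(2) by (intro pmI1 P1I[of a h]) auto
  next
    case 6 then show ?thesis using ab assms(2) by (intro pmI1 P1I[of a b]) auto
  qed
next
  case (2 a c)
  note ac = 2
  consider "a = h+2" | "a = h+1" "h+2 < c" | "a = h+1" "c = h+2" | "a < h+1" "c = h+2" | "c = h+1"
    | "a \<noteq> h+2" "a \<noteq> h+1" "c \<noteq> h+2" "c \<noteq> h+1" using ac by linarith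
  then show ?thesis
  proof cases
    case 1 then show ?thesis using ac assms(2) by (intro pmI1 P2I[of "h+1" c]) auto
  next
    case 2 then show ?thesis using ac assms(2) by (intro pmI1 P2I[of "h+2" c]) auto
  next
    case 3 then show ?thesis using ac assms(2) by (intro pmI1 P2I[of a c]) auto
  next
    case 4 then show ?thesis using ac assms(2) by (intro pmI1 P2I[of a "h+1"]) auto
  next
    case 5 then show ?thesis using ac assms(2) by (intro pmI1 P2I[of a "h+2"]) auto
  next
    case 6 then show ?thesis using ac assms(2) by (intro pmI1 P2I[of a c]) auto
  qed
next
  case (3 c)
  have cr: "1 \<le> c" "c \<le> r - 1" using 3 Y by auto
  note cc = 3 cr
  consider "c = h+2" | "c = h+1" | "c \<noteq> h+2" "c \<noteq> h+1" by blast
  then show ?thesis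
  proof cases
    case 1 then show ?thesis using cc assms(2) by (intro pmI1 P3I[of "h+1"]) auto
  next
    case 2 then show ?thesis using cc assms(2) by (intro pmI1 P3I[of "h+2"]) auto
  next
    case 3 then show ?thesis using cc assms(2) by (intro pmI1 P3I[of c]) auto
  qed
qed

lemma inc_Phi_low:
  assumes v: "v \<in> PhiS r Z" and "h+4 \<le> r" and Z: "Z \<subseteq> {1..r-1}"
  shows "(\<lambda>n. if n = h+1 then (if 1\<le>h then v h else 0) + v (h+2) - v (h+1) else v n) \<in> pm (PhiS r (transp_set (h+1) Z))"
  using v
proof (cases rule: PhiS_E)
  case (1 a b)
  have fe: "True" by simp
  note hh = 1 fe
  consider "a = h+2" | "b = h" | "a = h+1" "b = h+1" | "a = h+1" "h+1 < b" | "a < h+1" "b = h+1" | "h+2 < a \<or> b < h \<or> (a \<le> h \<and> h+2 \<le> b)" using hh assms by linarith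
  then show ?thesis
  proof cases
    case 1 then show ?thesis using hh assms by (intro pmI1 F1I[of "h+1" b]) auto
  next
    case 2 then show ?thesis using hh assms by (intro pmI1 F1I[of a "h+1"]) auto
  next
    case 3 then show ?thesis using hh assms by (intro pmI2 F1I[of "h+1" "h+1"]) auto
  next
    case 4 then show ?thesis using hh assms by (intro pmI1 F1I[of "h+2" b]) auto
  next
    case 5 then show ?thesis using hh assms by (intro pmI1 F1I[of a h]) auto
  next
    case 6 then show ?thesis using hh assms by (intro pmI1 F1I[of a b]) auto
  qed
next
  case (2 a)
  have fe: "True" by simp
  note hh = 2 fe
  consider "a = h+2" | "a = h+1" | "a \<noteq> h+2" "a \<noteq> h+1" using hh assms by linarith
  then show ?thesis
  proof cases
    case 1 then show ?thesis using hh assms by (intro pmI1 F2I[of "h+1"]) auto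
  next
    case 2 then show ?thesis using hh assms by (intro pmI1 F2I[of "h+2"]) auto
  next
    case 3 then show ?thesis using hh assms by (intro pmI1 F2I[of a]) auto
  qed
next
  case (3 a c)
  have fe: "True" by simp
  note hh = 3 fe
  consider "a = h+2" | "a = h+1" "h+2 < c" | "a = h+1" "c = h+2" | "a < h+1" "c = h+2" | "c = h+1" | "a \<noteq> h+2" "a \<noteq> h+1" "c \<noteq> h+2" "c \<noteq> h+1" using hh assms by linarith
  then show ?thesis
  proof cases
    case 1 then show ?thesis using hh assms by (intro pmI1 F3I[of "h+1" c]) auto
  next
    case 2 then show ?thesis using hh assms by (intro pmI1 F3I[of "h+2" c]) auto
  next
    case 3 then show ?thesis using hh assms by (intro pmI1 F3I[of a c]) auto
  next
    case 4 then show ?thesis using hh assms by (intro pmI1 F3I[of a "h+1"]) auto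
  next
    case 5 then show ?thesis using hh assms by (intro pmI1 F3I[of a "h+2"]) auto
  next
    case 6 then show ?thesis using hh assms by (intro pmI1 F3I[of a c]) auto
  qed
next
  case (4 c)
  have fe: "1 \<le> c" "c \<le> r - 1" using 4 Z by auto
  note hh = 4 fe
  consider "c = h+2" | "c = h+1" | "c \<noteq> h+2" "c \<noteq> h+1" using hh assms by linarith
  then show ?thesis
  proof cases
    case 1 then show ?thesis using hh assms by (intro pmI1 F4I[of "h+1"]) auto
  next
    case 2 then show ?thesis using hh assms by (intro pmI1 F4I[of "h+2"]) auto
  next
    case 3 then show ?thesis using hh assms by (intro pmI1 F4I[of c]) auto
  qed
qed

lemma inc_Phi_rm2:
  assumes v: "v \<in> PhiS (q+3) Z" and Z: "Z \<subseteq> {1..q+2}"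
  shows "(\<lambda>n. if n = q+1 then (if 1\<le>q then v q else 0) + v (q+2) + v (q+3) - v (q+1) else v n) \<in> pm (PhiS (q+3) (transp_set (q+1) Z))"
  using v
proof (cases rule: PhiS_E)
  case (1 a b)
  have fe: "True" by simp
  note hh = 1 fe
  consider "a = q+2" | "b = q" | "a=q+1" "b=q+1" | "a=q+1" "b=q+2" | "a<q+1" "b=q+1" | "a \<le> q" "b = q+2" | "b < q" using hh assms by linarith
  then show ?thesis
  proof cases
    case 1 then show ?thesis using hh assms by (intro pmI1 F1I[of "q+1" "q+2"]) auto
  next
    case 2 then show ?thesis using hh assms by (intro pmI1 F1I[of a "q+1"]) auto
  next
    case 3 then show ?thesis using hh assms by (intro pmI2 F1I[of "q+1" "q+1"]) auto
  next
    case 4 then show ?thesis using hh assms by (intro pmI1 F1I[of "q+2" "q+2"]) auto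
  next
    case 5 then show ?thesis using hh assms by (intro pmI1 F1I[of a q]) auto
  next
    case 6 then show ?thesis using hh assms by (intro pmI1 F1I[of a b]) auto
  next
    case 7 then show ?thesis using hh assms by (intro pmI1 F1I[of a b]) auto
  qed
next
  case (2 a)
  have fe: "True" by simp
  note hh = 2 fe
  consider "a = q+2" | "a = q+1" | "a \<le> q" using hh assms by linarith
  then show ?thesis
  proof cases
    case 1 then show ?thesis using hh assms by (intro pmI1 F2I[of "q+1"]) auto
  next
    case 2 then show ?thesis using hh assms by (intro pmI1 F2I[of "q+2"]) auto
  next
    case 3 then show ?thesis using hh assms by (intro pmI1 F2I[of a]) auto
  qed
next
  case (3 a c)
  have fe: "True" by simp
  note hh = 3 fe
  consider "c = q+2" "a = q+1" | "c = q+2" "a \<le> q" | "c = q+1" | "c \<le> q" using hh assms by linarith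
  then show ?thesis
  proof cases
    case 1 then show ?thesis using hh assms by (intro pmI1 F3I[of a c]) auto
  next
    case 2 then show ?thesis using hh assms by (intro pmI1 F3I[of a "q+1"]) auto
  next
    case 3 then show ?thesis using hh assms by (intro pmI1 F3I[of a "q+2"]) auto
  next
    case 4 then show ?thesis using hh assms by (intro pmI1 F3I[of a c]) auto
  qed
next
  case (4 c)
  have fe: "1 \<le> c" "c \<le> q+2" using 4 Z by auto
  note hh = 4 fe
  consider "c = q+2" | "c = q+1" | "c \<le> q" using hh assms by linarith
  then show ?thesis
  proof cases
    case 1 then show ?thesis using hh assms by (intro pmI1 F4I[of "q+1"]) auto
  next
    case 2 then show ?thesis using hh assms by (intro pmI1 F4I[of "q+2"]) auto
  next
    case 3 then show ?thesis using hh assms by (intro pmI1 F4I[of c]) auto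
  qed
qed

lemma inc_Phi_rm1_in:
  assumes v: "v \<in> PhiS (q+2) Z" and Z: "Z \<subseteq> {1..q+1}" and "q+1 \<in> Z" and "1 \<le> q"
  shows "(\<lambda>n. if n = q+1 then v q + v (q+2) - v (q+1) else v n) \<in> pm (PsiS (q+2) (Z - {q+1}))"
  using v
proof (cases rule: PhiS_E)
  case (1 a b)
  have fe: "True" by simp
  note hh = 1 fe
  consider "a=q+1" "b=q+1" | "a \<le> q" "b=q+1" | "b = q" | "b<q" using hh assms by linarith
  then show ?thesis
  proof cases
    case 1 then show ?thesis using hh assms by (intro pmI2 P1I[of "q+1" "q+1"]) auto
  next
    case 2 then show ?thesis using hh assms by (intro pmI1 P1I[of a q]) auto
  next
    case 3 then show ?thesis using hh assms by (intro pmI1 P1I[of a "q+1"]) auto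
  next
    case 4 then show ?thesis using hh assms by (intro pmI1 P1I[of a b]) auto
  qed
next
  case (2 a)
  have fe: "True" by simp
  note hh = 2 fe
  consider "a = q+1" | "a \<le> q" using hh assms by linarith
  then show ?thesis
  proof cases
    case 1 then show ?thesis using hh assms by (intro pmI1 P1I[of "q+1" "q+2"]) auto
  next
    case 2 then show ?thesis using hh assms by (intro pmI1 P2I[of a "q+1"]) auto
  qed
next
  case (3 a c)
  have fe: "True" by simp
  note hh = 3 fe
  consider "c = q+1" | "c \<le> q" using hh assms by linarith
  then show ?thesis
  proof cases
    case 1 then show ?thesis using hh assms by (intro pmI1 P1I[of a "q+2"]) auto
  next
    case 2 then show ?thesis using hh assms by (intro pmI1 P2I[of a c]) auto
  qed
next
  case (4 c)
  have fe: "1 \<le> c" "c \<le> q+1" using 4 Z by auto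
  note hh = 4 fe
  consider "c = q+1" | "c \<le> q" using hh assms by linarith
  then show ?thesis
  proof cases
    case 1 then show ?thesis using hh assms by (intro pmI1 P1I[of "q+2" "q+2"]) auto
  next
    case 2 then show ?thesis using hh assms by (intro pmI1 P3I[of c]) auto
  qed
qed

lemma inc_Psi_rm1_notin:
  assumes v: "v \<in> PsiS (q+2) Y" and Y: "Y \<subseteq> {1..q+1}" and "q+1 \<notin> Y" and "1 \<le> q"
  shows "(\<lambda>n. if n = q+1 then v q + v (q+2) - v (q+1) else v n) \<in> pm (PhiS (q+2) (Y \<union> {q+1}))"
  using v
proof (cases rule: PsiS_E)
  case (1 a b)
  have fe: "True" by simp
  note hh = 1 fe
  consider "a=q+2" | "a=q+1" "b=q+2" | "a \<le> q" "b=q+2" | "a=q+1" "b=q+1" | "a \<le> q" "b=q+1" | "b = q" | "b<q" using hh assms by linarith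
  then show ?thesis
  proof cases
    case 1 then show ?thesis using hh assms by (intro pmI1 F4I[of "q+1"]) auto
  next
    case 2 then show ?thesis using hh assms by (intro pmI1 F2I[of "q+1"]) auto
  next
    case 3 then show ?thesis using hh assms by (intro pmI1 F3I[of a "q+1"]) auto
  next
    case 4 then show ?thesis using hh assms by (intro pmI2 F1I[of "q+1" "q+1"]) auto
  next
    case 5 then show ?thesis using hh assms by (intro pmI1 F1I[of a q]) auto
  next
    case 6 then show ?thesis using hh assms by (intro pmI1 F1I[of a "q+1"]) auto
  next
    case 7 then show ?thesis using hh assms by (intro pmI1 F1I[of a b]) auto
  qed
next
  case (2 a c)
  have fe: "True" by simp
  note hh = 2 fe
  consider "c = q+1" | "c \<le> q" using hh assms by linarith
  then show ?thesis
  proof cases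
    case 1 then show ?thesis using hh assms by (intro pmI1 F2I[of a]) auto
  next
    case 2 then show ?thesis using hh assms by (intro pmI1 F3I[of a c]) auto
  qed
next
  case (3 c)
  have fe: "1 \<le> c" "c \<le> q" proof - have "c \<in> {1..q+1}" "c \<noteq> q+1" using 3 Y assms(3) by blast+ then show "1 \<le> c" "c \<le> q" by auto qed
  note hh = 3 fe
  consider "True" by blast
  then show ?thesis
  proof cases
    case 1 then show ?thesis using hh assms by (intro pmI1 F4I[of c]) auto
  qed
qed

lemma inc_Phi_rm1_notin:
  assumes v: "v \<in> PhiS (q+2) Z" and Z: "Z \<subseteq> {1..q+1}" and "q+1 \<notin> Z" and "1 \<le> q"
  shows "(\<lambda>n. if n = q+1 then v q - v (q+1) else v n) \<in> pm (PhiS (q+2) Z)"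
  using v
proof (cases rule: PhiS_E)
  case (1 a b)
  have fe: "True" by simp
  note hh = 1 fe
  consider "a=q+1" "b=q+1" | "a \<le> q" "b=q+1" | "b = q" | "b<q" using hh assms by linarith
  then show ?thesis
  proof cases
    case 1 then show ?thesis using hh assms by (intro pmI2 F1I[of "q+1" "q+1"]) auto
  next
    case 2 then show ?thesis using hh assms by (intro pmI1 F1I[of a q]) auto
  next
    case 3 then show ?thesis using hh assms by (intro pmI1 F1I[of a "q+1"]) auto
  next
    case 4 then show ?thesis using hh assms by (intro pmI1 F1I[of a b]) auto
  qed
next
  case (2 a)
  have fe: "True" by simp
  note hh = 2 fe
  consider "a = q+1" | "a \<le> q" using hh assms by linarith
  then show ?thesis
  proof cases
    case 1 then show ?thesis using hh assms by (intro pmI1 F2I[of "q+1"]) auto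
  next
    case 2 then show ?thesis using hh assms by (intro pmI1 F3I[of a "q+1"]) auto
  qed
next
  case (3 a c)
  have fe: "True" by simp
  note hh = 3 fe
  consider "c = q+1" | "c \<le> q" using hh assms by linarith
  then show ?thesis
  proof cases
    case 1 then show ?thesis using hh assms by (intro pmI1 F2I[of a]) auto
  next
    case 2 then show ?thesis using hh assms by (intro pmI1 F3I[of a c]) auto
  qed
next
  case (4 c)
  have fe: "1 \<le> c" "c \<le> q" proof - have "c \<in> {1..q+1}" "c \<noteq> q+1" using 4 Z assms(3) by blast+ then show "1 \<le> c" "c \<le> q" by auto qed
  note hh = 4 fe
  consider "True" by blast
  then show ?thesis
  proof cases
    case 1 then show ?thesis using hh assms by (intro pmI1 F4I[of c]) auto
  qed
qed

lemma inc_Psi_rm1_in: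
  assumes v: "v \<in> PsiS (q+2) Y" and Y: "Y \<subseteq> {1..q+1}" and "q+1 \<in> Y" and "1 \<le> q"
  shows "(\<lambda>n. if n = q+1 then v q + 2 * v (q+2) - v (q+1) else v n) \<in> pm (PsiS (q+2) Y)"
  using v
proof (cases rule: PsiS_E)
  case (1 a b)
  have fe: "True" by simp
  note hh = 1 fe
  consider "a=q+2" | "a=q+1" "b=q+2" | "a \<le> q" "b=q+2" | "a=q+1" "b=q+1" | "a \<le> q" "b=q+1" | "b = q" | "b<q" using hh assms by linarith
  then show ?thesis
  proof cases
    case 1 then show ?thesis using hh assms by (intro pmI1 P3I[of "q+1"]) auto
  next
    case 2 then show ?thesis using hh assms by (intro pmI1 P1I[of a b]) auto
  next
    case 3 then show ?thesis using hh assms by (intro pmI1 P2I[of a "q+1"]) auto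
  next
    case 4 then show ?thesis using hh assms by (intro pmI2 P1I[of "q+1" "q+1"]) auto
  next
    case 5 then show ?thesis using hh assms by (intro pmI1 P1I[of a q]) auto
  next
    case 6 then show ?thesis using hh assms by (intro pmI1 P1I[of a "q+1"]) auto
  next
    case 7 then show ?thesis using hh assms by (intro pmI1 P1I[of a b]) auto
  qed
next
  case (2 a c)
  have fe: "True" by simp
  note hh = 2 fe
  consider "c = q+1" | "c \<le> q" using hh assms by linarith
  then show ?thesis
  proof cases
    case 1 then show ?thesis using hh assms by (intro pmI1 P1I[of a "q+2"]) auto
  next
    case 2 then show ?thesis using hh assms by (intro pmI1 P2I[of a c]) auto
  qed
next
  case (3 c)
  have fe: "1 \<le> c" "c \<le> q+1" using 3 Y by auto
  note hh = 3 fe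
  consider "c = q+1" | "c \<le> q" using hh assms by linarith
  then show ?thesis
  proof cases
    case 1 then show ?thesis using hh assms by (intro pmI1 P1I[of "q+2" "q+2"]) auto
  next
    case 2 then show ?thesis using hh assms by (intro pmI1 P3I[of c]) auto
  qed
qed

lemma inc_Psi_r:
  assumes v: "v \<in> PsiS (q+2) Y" and Y: "Y \<subseteq> {1..q+1}"
  shows "(\<lambda>n. if n = q+2 then v (q+1) - v (q+2) else v n) \<in> pm (PsiS (q+2) Y)"
  using v
proof (cases rule: PsiS_E)
  case (1 a b)
  have fe: "True" by simp
  note hh = 1 fe
  consider "a=q+2" | "a \<le> q+1" "b=q+2" | "b=q+1" | "b \<le> q" using hh assms by linarith
  then show ?thesis
  proof cases
    case 1 then show ?thesis using hh assms by (intro pmI2 P1I[of "q+2" "q+2"]) auto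
  next
    case 2 then show ?thesis using hh assms by (intro pmI1 P1I[of a "q+1"]) auto
  next
    case 3 then show ?thesis using hh assms by (intro pmI1 P1I[of a "q+2"]) auto
  next
    case 4 then show ?thesis using hh assms by (intro pmI1 P1I[of a b]) auto
  qed
next
  case (2 a c)
  have fe: "True" by simp
  note hh = 2 fe
  consider "True" by blast
  then show ?thesis
  proof cases
    case 1 then show ?thesis using hh assms by (intro pmI1 P2I[of a c]) auto
  qed
next
  case (3 c)
  have fe: "1 \<le> c" "c \<le> q+1" using 3 Y by auto
  note hh = 3 fe
  consider "True" by blast
  then show ?thesis
  proof cases
    case 1 then show ?thesis using hh assms by (intro pmI1 P3I[of c]) auto
  qed
qed




lemma sig_Psi_low_h:
  assumes "h+3\<le>r" "Y\<subseteq>{1..r-1}" "r\<ge>3"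
  shows "sigma r (PsiS r Y) (h+1) v = (\<lambda>n. if n = h+1 then (if 1\<le>h then v h else 0) + v (h+2) - v (h+1) else v n)"
proof -
  have eq: "sigma r (PsiS r Y) (h+1) v = (\<lambda>n. if n = h+1 then (if 2\<le>h+1 then v (h+1-1) else 0) + v (h+1+1) - v (h+1) else v n)"
    by (rule sig_Psi_low) (use assms in auto)
  have e: "h+1-1 = h" "h+1+1 = h+2" "(2 \<le> h+1) = (1 \<le> h)" by auto
  show ?thesis using eq unfolding e .
qed

lemma sig_Phi_low_h:
  assumes "h+4\<le>r" "Z\<subseteq>{1..r-1}" "r\<ge>3"
  shows "sigma r (PhiS r Z) (h+1) v = (\<lambda>n. if n = h+1 then (if 1\<le>h then v h else 0) + v (h+2) - v (h+1) else v n)"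
proof -
  have eq: "sigma r (PhiS r Z) (h+1) v = (\<lambda>n. if n = h+1 then (if 2\<le>h+1 then v (h+1-1) else 0) + v (h+1+1) - v (h+1) else v n)"
    by (rule sig_Phi_low) (use assms in auto)
  have e: "h+1-1 = h" "h+1+1 = h+2" "(2 \<le> h+1) = (1 \<le> h)" by auto
  show ?thesis using eq unfolding e .
qed

lemma sig_Phi_rm2_q:
  assumes "Z\<subseteq>{1..q+2}"
  shows "sigma (q+3) (PhiS (q+3) Z) (q+1) v = (\<lambda>n. if n = q+1 then (if 1\<le>q then v q else 0) + v (q+2) + v (q+3) - v (q+1) else v n)"
proof -
  have e: "q+3-2 = q+1" "q+3-3 = q" "q+3-1 = q+2" "(4 \<le> q+3) = (1 \<le> q)" by auto
  have eq: "sigma (q+3) (PhiS (q+3) Z) (q+3-2) v = (\<lambda>n. if n = q+3-2 then (if 4\<le>q+3 then v (q+3-3) else 0) + v (q+3-1) + v (q+3) - v (q+3-2) else v n)"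
    by (rule sig_Phi_rm2) (use assms in \<open>auto simp: e\<close>)
  show ?thesis using eq unfolding e .
qed

lemma sig_Phi_rm1_q:
  assumes "Z\<subseteq>{1..q+1}" "1 \<le> q"
  shows "sigma (q+2) (PhiS (q+2) Z) (q+1) v = (\<lambda>n. if n = q+1 then v q + (if q+1\<in>Z then v (q+2) else 0) - v (q+1) else v n)"
proof -
  have e: "q+2-2 = q" "q+2-1 = q+1" by auto
  have eq: "sigma (q+2) (PhiS (q+2) Z) (q+2-1) v = (\<lambda>n. if n = q+2-1 then v (q+2-2) + (if q+2-1\<in>Z then v (q+2) else 0) - v (q+2-1) else v n)"
    by (rule sig_Phi_rm1) (use assms in \<open>auto simp: e\<close>)
  show ?thesis using eq unfolding e .
qed

lemma sig_Psi_rm1_q: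
  assumes "Y\<subseteq>{1..q+1}" "1 \<le> q"
  shows "sigma (q+2) (PsiS (q+2) Y) (q+1) v = (\<lambda>n. if n = q+1 then v q + (if q+1\<in>Y then 2 else 1) * v (q+2) - v (q+1) else v n)"
proof -
  have e: "q+2-2 = q" "q+2-1 = q+1" by auto
  have eq: "sigma (q+2) (PsiS (q+2) Y) (q+2-1) v = (\<lambda>n. if n = q+2-1 then v (q+2-2) + (if q+2-1\<in>Y then 2 else 1) * v (q+2) - v (q+2-1) else v n)"
    by (rule sig_Psi_rm1) (use assms in \<open>auto simp: e\<close>)
  show ?thesis using eq unfolding e .
qed

lemma sig_Psi_r_q:
  assumes "Y\<subseteq>{1..q+1}" "1 \<le> q"
  shows "sigma (q+2) (PsiS (q+2) Y) (q+2) v = (\<lambda>n. if n = q+2 then v (q+1) - v (q+2) else v n)"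
proof -
  have e: "q+2-1 = q+1" by auto
  have eq: "sigma (q+2) (PsiS (q+2) Y) (q+2) v = (\<lambda>n. if n = q+2 then v (q+2-1) - v (q+2) else v n)"
    by (rule sig_Psi_r) (use assms in \<open>auto simp: e\<close>)
  show ?thesis using eq unfolding e .
qed




lemma sigma_invol:
  assumes "i \<in> {1..r}"
  shows "sigma r L i (sigma r L i v) = v"
proof (rule ext)
  fix n
  define T where "T = (\<Sum>j\<in>{1..r}. cartan L i j * v j)"
  have a: "\<And>j. sigma r L i v j = v j - (if j = i then T else 0)" by (simp add: sigma_apply T_def)
  have "(\<Sum>j\<in>{1..r}. cartan L i j * sigma r L i v j) = (\<Sum>j\<in>{1..r}. cartan L i j * v j - (if j = i then cartan L i i * T else 0))"
    by (rule sum.cong) (auto simp: a right_diff_distrib)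
  also have "\<dots> = T - 2 * T" using assms by (simp add: sum_subtractf T_def cartan_def)
  finally have b: "(\<Sum>j\<in>{1..r}. cartan L i j * sigma r L i v j) = - T" by simp
  have "sigma r L i (sigma r L i v) n = (if n = i then sigma r L i v i - (\<Sum>j\<in>{1..r}. cartan L i j * sigma r L i v j) else sigma r L i v n)"
    by (rule sigma_apply)
  also have "\<dots> = v n" unfolding b by (simp add: a)
  finally show "sigma r L i (sigma r L i v) n = v n" .
qed

lemma sigma_neg: "sigma r L i (- v) = - sigma r L i v"
  by (rule ext) (simp add: sigma_apply sum_negf)

lemma refl_image:
  assumes inv: "\<And>v. f (f v) = v" and neg: "\<And>v. f (- v) = - f v"
    and A: "\<And>v. v \<in> A \<Longrightarrow> f v \<in> pm B" and B: "\<And>v. v \<in> B \<Longrightarrow> f v \<in> pm A"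
  shows "f ` pm A = pm B"
proof
  show "f ` pm A \<subseteq> pm B"
  proof
    fix x assume "x \<in> f ` pm A"
    then obtain v where v: "v \<in> pm A" "x = f v" by blast
    then consider "v \<in> A" | "- v \<in> A" unfolding pm_def by (auto simp: image_iff)
    then show "x \<in> pm B"
    proof cases
      case 1 then show ?thesis using v A by simp
    next
      case 2
      then have "f (- v) \<in> pm B" by (rule A)
      then have "- x \<in> pm B" using v neg by simp
      then show ?thesis unfolding pm_def by (auto simp: image_iff) (metis minus_minus)
    qed
  qed
next
  show "pm B \<subseteq> f ` pm A"
  proof
    fix x assume x: "x \<in> pm B"
    then consider "x \<in> B" | "- x \<in> B" unfolding pm_def by (auto simp: image_iff)
    then show "x \<in> f ` pm A"
    proof cases
      case 1
      then have "f x \<in> pm A" by (rule B)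
      moreover have "x = f (f x)" using inv by simp
      ultimately show ?thesis by blast
    next
      case 2
      then have "f (- x) \<in> pm A" by (rule B)
      then have "- f (- x) \<in> pm A" unfolding pm_def by (auto simp: image_iff)
      moreover have "x = f (- f (- x))" using inv neg by (metis minus_minus)
      ultimately show ?thesis by blast
    qed
  qed
qed

lemma transp_invol: "transp_set i (transp_set i Y) = Y"
  by (rule set_eqI) (simp add: transp_mem split: if_splits)

lemma transp_sub: "Y \<subseteq> {1..r-1} \<Longrightarrow> 1 \<le> i \<Longrightarrow> i+2 \<le> r \<Longrightarrow> transp_set i Y \<subseteq> {1..r-1}"
  unfolding transp_set_def by auto

lemma fin_Psi_low:
  assumes "h+3 \<le> r" "Y \<subseteq> {1..r-1}" "r\<ge>3"
  shows "sigma_pm r (PsiS r Y) (h+1) = pm (PsiS r (transp_set (h+1) Y))"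
  unfolding sigma_pm_def
proof (rule refl_image)
  show "sigma r (PsiS r Y) (h+1) (sigma r (PsiS r Y) (h+1) v) = v" for v
    by (rule sigma_invol) (use assms in auto)
  show "sigma r (PsiS r Y) (h+1) (- v) = - sigma r (PsiS r Y) (h+1) v" for v by (rule sigma_neg)
  have tY: "transp_set (h+1) Y \<subseteq> {1..r-1}" by (rule transp_sub) (use assms in auto)
  show "sigma r (PsiS r Y) (h+1) v \<in> pm (PsiS r (transp_set (h+1) Y))" if "v \<in> PsiS r Y" for v
    unfolding sig_Psi_low_h[OF assms] by (rule inc_Psi_low) (use that assms in auto)
  show "sigma r (PsiS r Y) (h+1) v \<in> pm (PsiS r Y)" if "v \<in> PsiS r (transp_set (h+1) Y)" for v
    unfolding sig_Psi_low_h[OF assms] using inc_Psi_low[OF that assms(1) tY] unfolding transp_invol .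
qed

lemma fin_Phi_low:
  assumes "h+4 \<le> r" "Z \<subseteq> {1..r-1}" "r\<ge>3"
  shows "sigma_pm r (PhiS r Z) (h+1) = pm (PhiS r (transp_set (h+1) Z))"
  unfolding sigma_pm_def
proof (rule refl_image)
  show "sigma r (PhiS r Z) (h+1) (sigma r (PhiS r Z) (h+1) v) = v" for v
    by (rule sigma_invol) (use assms in auto)
  show "sigma r (PhiS r Z) (h+1) (- v) = - sigma r (PhiS r Z) (h+1) v" for v by (rule sigma_neg)
  have tZ: "transp_set (h+1) Z \<subseteq> {1..r-1}" by (rule transp_sub) (use assms in auto)
  show "sigma r (PhiS r Z) (h+1) v \<in> pm (PhiS r (transp_set (h+1) Z))" if "v \<in> PhiS r Z" for v
    unfolding sig_Phi_low_h[OF assms] by (rule inc_Phi_low) (use that assms in auto)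
  show "sigma r (PhiS r Z) (h+1) v \<in> pm (PhiS r Z)" if "v \<in> PhiS r (transp_set (h+1) Z)" for v
    unfolding sig_Phi_low_h[OF assms] using inc_Phi_low[OF that assms(1) tZ] unfolding transp_invol .
qed

lemma fin_Phi_rm2:
  assumes "Z \<subseteq> {1..q+2}"
  shows "sigma_pm (q+3) (PhiS (q+3) Z) (q+1) = pm (PhiS (q+3) (transp_set (q+1) Z))"
  unfolding sigma_pm_def
proof (rule refl_image)
  show "sigma (q+3) (PhiS (q+3) Z) (q+1) (sigma (q+3) (PhiS (q+3) Z) (q+1) v) = v" for v
    by (rule sigma_invol) auto
  show "sigma (q+3) (PhiS (q+3) Z) (q+1) (- v) = - sigma (q+3) (PhiS (q+3) Z) (q+1) v" for v by (rule sigma_neg)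
  have tZ: "transp_set (q+1) Z \<subseteq> {1..q+2}" using transp_sub[of Z "q+3" "q+1"] assms by auto
  show "sigma (q+3) (PhiS (q+3) Z) (q+1) v \<in> pm (PhiS (q+3) (transp_set (q+1) Z))" if "v \<in> PhiS (q+3) Z" for v
    unfolding sig_Phi_rm2_q[OF assms] by (rule inc_Phi_rm2) (use that assms in auto)
  show "sigma (q+3) (PhiS (q+3) Z) (q+1) v \<in> pm (PhiS (q+3) Z)" if "v \<in> PhiS (q+3) (transp_set (q+1) Z)" for v
    unfolding sig_Phi_rm2_q[OF assms] using inc_Phi_rm2[OF that tZ] unfolding transp_invol .
qed

lemma fin_Phi_rm1_in:
  assumes Z: "Z \<subseteq> {1..q+1}" and "q+1 \<in> Z" "1 \<le> q"
  shows "sigma_pm (q+2) (PhiS (q+2) Z) (q+1) = pm (PsiS (q+2) (Z - {q+1}))"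
  unfolding sigma_pm_def
proof (rule refl_image)
  show "sigma (q+2) (PhiS (q+2) Z) (q+1) (sigma (q+2) (PhiS (q+2) Z) (q+1) v) = v" for v
    by (rule sigma_invol) auto
  show "sigma (q+2) (PhiS (q+2) Z) (q+1) (- v) = - sigma (q+2) (PhiS (q+2) Z) (q+1) v" for v by (rule sigma_neg)
  have e: "(\<lambda>n. if n = q+1 then v q + (if q+1\<in>Z then v (q+2) else 0) - v (q+1) else v n)
     = (\<lambda>n. if n = q+1 then v q + v (q+2) - v (q+1) else v n)" for v :: vec using assms by (intro ext) simp
  show "sigma (q+2) (PhiS (q+2) Z) (q+1) v \<in> pm (PsiS (q+2) (Z - {q+1}))" if "v \<in> PhiS (q+2) Z" for v
    unfolding sig_Phi_rm1_q[OF Z assms(3)] e by (rule inc_Phi_rm1_in) (use that assms in auto)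
  have Y: "Z - {q+1} \<subseteq> {1..q+1}" "q+1 \<notin> Z - {q+1}" "(Z - {q+1}) \<union> {q+1} = Z" using assms by auto
  show "sigma (q+2) (PhiS (q+2) Z) (q+1) v \<in> pm (PhiS (q+2) Z)" if "v \<in> PsiS (q+2) (Z - {q+1})" for v
    unfolding sig_Phi_rm1_q[OF Z assms(3)] e using inc_Psi_rm1_notin[OF that Y(1,2) assms(3)] unfolding Y(3) .
qed

lemma fin_Psi_rm1_notin:
  assumes Y: "Y \<subseteq> {1..q+1}" and "q+1 \<notin> Y" "1 \<le> q"
  shows "sigma_pm (q+2) (PsiS (q+2) Y) (q+1) = pm (PhiS (q+2) (Y \<union> {q+1}))"
  unfolding sigma_pm_def
proof (rule refl_image)
  show "sigma (q+2) (PsiS (q+2) Y) (q+1) (sigma (q+2) (PsiS (q+2) Y) (q+1) v) = v" for v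
    by (rule sigma_invol) auto
  show "sigma (q+2) (PsiS (q+2) Y) (q+1) (- v) = - sigma (q+2) (PsiS (q+2) Y) (q+1) v" for v by (rule sigma_neg)
  have e: "(\<lambda>n. if n = q+1 then v q + (if q+1\<in>Y then 2 else 1) * v (q+2) - v (q+1) else v n)
     = (\<lambda>n. if n = q+1 then v q + v (q+2) - v (q+1) else v n)" for v :: vec using assms by (intro ext) simp
  show "sigma (q+2) (PsiS (q+2) Y) (q+1) v \<in> pm (PhiS (q+2) (Y \<union> {q+1}))" if "v \<in> PsiS (q+2) Y" for v
    unfolding sig_Psi_rm1_q[OF Y assms(3)] e by (rule inc_Psi_rm1_notin) (use that assms in auto)
  have Z: "Y \<union> {q+1} \<subseteq> {1..q+1}" "q+1 \<in> Y \<union> {q+1}" "(Y \<union> {q+1}) - {q+1} = Y" using assms by auto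
  show "sigma (q+2) (PsiS (q+2) Y) (q+1) v \<in> pm (PsiS (q+2) Y)" if "v \<in> PhiS (q+2) (Y \<union> {q+1})" for v
    unfolding sig_Psi_rm1_q[OF Y assms(3)] e using inc_Phi_rm1_in[OF that Z(1,2) assms(3)] unfolding Z(3) .
qed

lemma fin_Phi_rm1_notin:
  assumes Z: "Z \<subseteq> {1..q+1}" and "q+1 \<notin> Z" "1 \<le> q"
  shows "sigma_pm (q+2) (PhiS (q+2) Z) (q+1) = pm (PhiS (q+2) Z)"
  unfolding sigma_pm_def
proof (rule refl_image)
  show "sigma (q+2) (PhiS (q+2) Z) (q+1) (sigma (q+2) (PhiS (q+2) Z) (q+1) v) = v" for v
    by (rule sigma_invol) auto
  show "sigma (q+2) (PhiS (q+2) Z) (q+1) (- v) = - sigma (q+2) (PhiS (q+2) Z) (q+1) v" for v by (rule sigma_neg)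
  have e: "(\<lambda>n. if n = q+1 then v q + (if q+1\<in>Z then v (q+2) else 0) - v (q+1) else v n)
     = (\<lambda>n. if n = q+1 then v q - v (q+1) else v n)" for v :: vec using assms by (intro ext) simp
  show "sigma (q+2) (PhiS (q+2) Z) (q+1) v \<in> pm (PhiS (q+2) Z)" if "v \<in> PhiS (q+2) Z" for v
    unfolding sig_Phi_rm1_q[OF Z assms(3)] e by (rule inc_Phi_rm1_notin) (use that assms in auto)
  then show "sigma (q+2) (PhiS (q+2) Z) (q+1) v \<in> pm (PhiS (q+2) Z)" if "v \<in> PhiS (q+2) Z" for v
    using that .
qed

lemma fin_Psi_rm1_in:
  assumes Y: "Y \<subseteq> {1..q+1}" and "q+1 \<in> Y" "1 \<le> q"
  shows "sigma_pm (q+2) (PsiS (q+2) Y) (q+1) = pm (PsiS (q+2) Y)"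
  unfolding sigma_pm_def
proof (rule refl_image)
  show "sigma (q+2) (PsiS (q+2) Y) (q+1) (sigma (q+2) (PsiS (q+2) Y) (q+1) v) = v" for v
    by (rule sigma_invol) auto
  show "sigma (q+2) (PsiS (q+2) Y) (q+1) (- v) = - sigma (q+2) (PsiS (q+2) Y) (q+1) v" for v by (rule sigma_neg)
  have e: "(\<lambda>n. if n = q+1 then v q + (if q+1\<in>Y then 2 else 1) * v (q+2) - v (q+1) else v n)
     = (\<lambda>n. if n = q+1 then v q + 2 * v (q+2) - v (q+1) else v n)" for v :: vec using assms by (intro ext) simp
  show "sigma (q+2) (PsiS (q+2) Y) (q+1) v \<in> pm (PsiS (q+2) Y)" if "v \<in> PsiS (q+2) Y" for v
    unfolding sig_Psi_rm1_q[OF Y assms(3)] e by (rule inc_Psi_rm1_in) (use that assms in auto)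
  then show "sigma (q+2) (PsiS (q+2) Y) (q+1) v \<in> pm (PsiS (q+2) Y)" if "v \<in> PsiS (q+2) Y" for v
    using that .
qed

lemma fin_Psi_r:
  assumes Y: "Y \<subseteq> {1..q+1}" and "1 \<le> q"
  shows "sigma_pm (q+2) (PsiS (q+2) Y) (q+2) = pm (PsiS (q+2) Y)"
  unfolding sigma_pm_def
proof (rule refl_image)
  show "sigma (q+2) (PsiS (q+2) Y) (q+2) (sigma (q+2) (PsiS (q+2) Y) (q+2) v) = v" for v
    by (rule sigma_invol) auto
  show "sigma (q+2) (PsiS (q+2) Y) (q+2) (- v) = - sigma (q+2) (PsiS (q+2) Y) (q+2) v" for v by (rule sigma_neg)
  show "sigma (q+2) (PsiS (q+2) Y) (q+2) v \<in> pm (PsiS (q+2) Y)" if "v \<in> PsiS (q+2) Y" for v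
    unfolding sig_Psi_r_q[OF Y assms(2)] by (rule inc_Psi_r) (use that assms in auto)
  then show "sigma (q+2) (PsiS (q+2) Y) (q+2) v \<in> pm (PsiS (q+2) Y)" if "v \<in> PsiS (q+2) Y" for v
    using that .
qed




definition tau :: "nat \<Rightarrow> nat \<Rightarrow> nat" where
  "tau q k = (if k = q+1 then q+2 else if k = q+2 then q+1 else k)"

lemma tau_tau[simp]: "tau q (tau q k) = k" by (simp add: tau_def)

lemma swapc_q: "swapc (q+2) v = (\<lambda>k. v (tau q k))"
  by (rule ext) (simp add: swapc_def tau_def)

lemma swap_invol: "swapc (q+2) (swapc (q+2) v) = v"
  unfolding swapc_q by simp

lemma swap_neg: "swapc r (- v) = - swapc r v"
  by (rule ext) (simp add: swapc_def)

lemma swap_lin: "swapc (q+2) (of_nat k * alpha i + alpha j) = of_nat k * alpha (tau q i) + alpha (tau q j)"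
  unfolding swapc_q by (rule ext) (auto simp: tau_def)

lemma swap_mem: "x \<in> swapc (q+2) ` L \<longleftrightarrow> swapc (q+2) x \<in> L"
  by (metis image_iff swap_invol)

lemma cartan_swap: "cartan (swapc (q+2) ` L) i j = cartan L (tau q i) (tau q j)"
proof -
  have "(i = j) = (tau q i = tau q j)" by (metis tau_tau)
  moreover have "{k. of_nat k * alpha i + alpha j \<in> swapc (q+2) ` L} = {k. of_nat k * alpha (tau q i) + alpha (tau q j) \<in> L}"
    unfolding swap_mem swap_lin by simp
  ultimately show ?thesis by (simp add: cartan_def)
qed

lemma tau_range: "k \<in> {1..q+2} \<Longrightarrow> tau q k \<in> {1..q+2}" by (auto simp: tau_def)

lemma sigma_swap: "sigma (q+2) (swapc (q+2) ` L) i (swapc (q+2) v) = swapc (q+2) (sigma (q+2) L (tau q i) v)"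
proof -
  have S: "(\<Sum>j\<in>{1..q+2}. cartan (swapc (q+2) ` L) i j * swapc (q+2) v j) = (\<Sum>j\<in>{1..q+2}. cartan L (tau q i) j * v j)"
    unfolding cartan_swap swapc_q by (rule sum.reindex_bij_witness[of _ "tau q" "tau q"]) (auto simp: tau_def)
  have ti: "(tau q n = tau q i) = (n = i)" for n by (metis tau_tau)
  show ?thesis
  proof (rule ext)
    fix n
    have "sigma (q+2) (swapc (q+2) ` L) i (swapc (q+2) v) n = (if n = i then swapc (q+2) v i - (\<Sum>j\<in>{1..q+2}. cartan (swapc (q+2) ` L) i j * swapc (q+2) v j) else swapc (q+2) v n)"
      by (rule sigma_apply)
    also have "\<dots> = (if tau q n = tau q i then v (tau q i) - (\<Sum>j\<in>{1..q+2}. cartan L (tau q i) j * v j) else v (tau q n))"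
      unfolding S ti unfolding swapc_q by simp
    also have "\<dots> = sigma (q+2) L (tau q i) v (tau q n)" unfolding sigma_apply ..
    also have "\<dots> = swapc (q+2) (sigma (q+2) L (tau q i) v) n" unfolding swapc_q ..
    finally show "sigma (q+2) (swapc (q+2) ` L) i (swapc (q+2) v) n = swapc (q+2) (sigma (q+2) L (tau q i) v) n" .
  qed
qed

lemma pm_swap: "pm (swapc r ` L) = swapc r ` pm L"
  unfolding pm_def by (auto simp: image_Un image_image swap_neg)

lemma sigma_pm_swap: "sigma_pm (q+2) (swapc (q+2) ` L) i = swapc (q+2) ` sigma_pm (q+2) L (tau q i)"
  unfolding sigma_pm_def pm_swap image_image sigma_swap by simp

lemma Phi_swap_sub:
  assumes v: "v \<in> PhiS (q+2) Z" and "1 \<le> q" and Z: "Z \<subseteq> {1..q+1}"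
  shows "swapc (q+2) v \<in> PhiS (q+2) Z"
  using v
proof (cases rule: PhiS_E)
  case (1 a b)
  then consider "b = q+1" | "b \<le> q" by linarith
  then show ?thesis
  proof cases
    case 1 then show ?thesis using \<open>1\<le>a\<close> \<open>a\<le>b\<close> \<open>v = eta a b\<close> by (intro F2I[of a]) (auto simp: swapc_def)
  next
    case 2 then show ?thesis using \<open>1\<le>a\<close> \<open>a\<le>b\<close> \<open>v = eta a b\<close> by (intro F1I[of a b]) (auto simp: swapc_def)
  qed
next
  case (2 a) then show ?thesis by (intro F1I[of a "q+1"]) (auto simp: swapc_def)
next
  case (3 a c) then show ?thesis using assms(2) by (intro F3I[of a c]) (auto simp: swapc_def)
next
  case (4 c) then show ?thesis using assms(2) Z by (intro F4I[of c]) (auto simp: swapc_def)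
qed

lemma Phi_swap: assumes "1 \<le> q" "Z \<subseteq> {1..q+1}" shows "swapc (q+2) ` PhiS (q+2) Z = PhiS (q+2) Z"
proof
  show "swapc (q+2) ` PhiS (q+2) Z \<subseteq> PhiS (q+2) Z" using Phi_swap_sub[OF _ assms] by blast
  show "PhiS (q+2) Z \<subseteq> swapc (q+2) ` PhiS (q+2) Z"
  proof
    fix x assume "x \<in> PhiS (q+2) Z"
    then have "swapc (q+2) x \<in> PhiS (q+2) Z" using Phi_swap_sub[OF _ assms] by blast
    then show "x \<in> swapc (q+2) ` PhiS (q+2) Z" unfolding swap_mem .
  qed
qed




lemma part_Phi_low:
  assumes "i \<in> {1..q}" "Z \<subseteq> {1..q+1}" "1 \<le> q"
  shows "sigma_pm (q+2) (PhiS (q+2) Z) i = pm (PhiS (q+2) (transp_set i Z))"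
proof (cases "i+1 \<le> q")
  case True
  obtain h where i: "i = h+1" using assms(1) by (metis Suc_eq_plus1 atLeastAtMost_iff not0_implies_Suc not_one_le_zero)
  have "sigma_pm (q+2) (PhiS (q+2) Z) (h+1) = pm (PhiS (q+2) (transp_set (h+1) Z))"
    by (rule fin_Phi_low) (use assms True i in auto)
  then show ?thesis unfolding i .
next
  case False
  obtain p where p: "q = p+1" using assms(3) by (metis Suc_eq_plus1 not0_implies_Suc not_one_le_zero)
  have e: "q+2 = p+3" "i = p+1" using False assms(1) p by auto
  have "sigma_pm (p+3) (PhiS (p+3) Z) (p+1) = pm (PhiS (p+3) (transp_set (p+1) Z))"
    by (rule fin_Phi_rm2) (use assms p in auto)
  then show ?thesis unfolding e .
qed

lemma part_Psi_low:
  assumes "i \<in> {1..q}" "Y \<subseteq> {1..q+1}" "1 \<le> q"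
  shows "sigma_pm (q+2) (PsiS (q+2) Y) i = pm (PsiS (q+2) (transp_set i Y))"
proof -
  obtain h where i: "i = h+1" using assms(1) by (metis Suc_eq_plus1 atLeastAtMost_iff not0_implies_Suc not_one_le_zero)
  have "sigma_pm (q+2) (PsiS (q+2) Y) (h+1) = pm (PsiS (q+2) (transp_set (h+1) Y))"
    by (rule fin_Psi_low) (use assms i in auto)
  then show ?thesis unfolding i .
qed

lemma part_Psi'_low:
  assumes "i \<in> {1..q}" "Y \<subseteq> {1..q+1}" "1 \<le> q"
  shows "sigma_pm (q+2) (PsiS' (q+2) Y) i = pm (PsiS' (q+2) (transp_set i Y))"
proof -
  have t: "tau q i = i" using assms(1) by (auto simp: tau_def)
  have "sigma_pm (q+2) (PsiS' (q+2) Y) i = swapc (q+2) ` sigma_pm (q+2) (PsiS (q+2) Y) (tau q i)"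
    unfolding PsiS'_def by (rule sigma_pm_swap)
  also have "\<dots> = swapc (q+2) ` pm (PsiS (q+2) (transp_set i Y))" unfolding t part_Psi_low[OF assms] ..
  also have "\<dots> = pm (PsiS' (q+2) (transp_set i Y))" unfolding PsiS'_def pm_swap ..
  finally show ?thesis .
qed

lemma tq1: "tau q (q+2) = q+1" by (simp add: tau_def)
lemma tq2: "tau q (q+1) = q+2" by (simp add: tau_def)

lemma part_Phi_r:
  assumes "Z \<subseteq> {1..q+1}" "1 \<le> q"
  shows "sigma_pm (q+2) (PhiS (q+2) Z) (q+2) = swapc (q+2) ` sigma_pm (q+2) (PhiS (q+2) Z) (q+1)"
proof -
  have "sigma_pm (q+2) (swapc (q+2) ` PhiS (q+2) Z) (q+2) = swapc (q+2) ` sigma_pm (q+2) (PhiS (q+2) Z) (tau q (q+2))"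
    by (rule sigma_pm_swap)
  then show ?thesis unfolding Phi_swap[OF assms(2,1)] tq1 .
qed

lemma part_Psi'_r:
  shows "sigma_pm (q+2) (PsiS' (q+2) Y) (q+2) = swapc (q+2) ` sigma_pm (q+2) (PsiS (q+2) Y) (q+1)"
  unfolding PsiS'_def sigma_pm_swap tq1 ..

lemma part_Psi'_rm1:
  shows "sigma_pm (q+2) (PsiS' (q+2) Y) (q+1) = swapc (q+2) ` sigma_pm (q+2) (PsiS (q+2) Y) (q+2)"
  unfolding PsiS'_def sigma_pm_swap tq2 ..

lemma main_q:
  assumes "1 \<le> q" "Y \<subseteq> {1..q+1}" "Z \<subseteq> {1..q+1}"
  shows
    "(\<forall>i\<in>{1..q}.
        sigma_pm (q+2) (PhiS (q+2) Z) i = pm (PhiS (q+2) (transp_set i Z)) \<and>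
        sigma_pm (q+2) (PsiS (q+2) Y) i = pm (PsiS (q+2) (transp_set i Y)) \<and>
        sigma_pm (q+2) (PsiS' (q+2) Y) i = pm (PsiS' (q+2) (transp_set i Y)))
   \<and> (q+1 \<notin> Z \<longrightarrow>
        sigma_pm (q+2) (PhiS (q+2) Z) (q+1) = pm (PhiS (q+2) Z) \<and>
        sigma_pm (q+2) (PhiS (q+2) Z) (q+2) = pm (PhiS (q+2) Z))
   \<and> (q+1 \<in> Z \<longrightarrow>
        sigma_pm (q+2) (PhiS (q+2) Z) (q+1) = pm (PsiS (q+2) (Z - {q+1})) \<and>
        sigma_pm (q+2) (PhiS (q+2) Z) (q+2) = pm (PsiS' (q+2) (Z - {q+1})))
   \<and> (q+1 \<notin> Y \<longrightarrow>
        sigma_pm (q+2) (PsiS (q+2) Y) (q+1) = pm (PhiS (q+2) (Y \<union> {q+1})) \<and>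
        sigma_pm (q+2) (PsiS (q+2) Y) (q+2) = pm (PsiS (q+2) Y) \<and>
        sigma_pm (q+2) (PsiS' (q+2) Y) (q+2) = pm (PhiS (q+2) (Y \<union> {q+1})) \<and>
        sigma_pm (q+2) (PsiS' (q+2) Y) (q+1) = pm (PsiS' (q+2) Y))
   \<and> (q+1 \<in> Y \<longrightarrow>
        sigma_pm (q+2) (PsiS (q+2) Y) (q+1) = pm (PsiS (q+2) Y) \<and>
        sigma_pm (q+2) (PsiS (q+2) Y) (q+2) = pm (PsiS (q+2) Y) \<and>
        sigma_pm (q+2) (PsiS' (q+2) Y) (q+1) = pm (PsiS' (q+2) Y) \<and>
        sigma_pm (q+2) (PsiS' (q+2) Y) (q+2) = pm (PsiS' (q+2) Y))"
proof (intro conjI impI ballI)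
  fix i assume i: "i \<in> {1..q}"
  show "sigma_pm (q+2) (PhiS (q+2) Z) i = pm (PhiS (q+2) (transp_set i Z))" by (rule part_Phi_low[OF i assms(3,1)])
  show "sigma_pm (q+2) (PsiS (q+2) Y) i = pm (PsiS (q+2) (transp_set i Y))" by (rule part_Psi_low[OF i assms(2,1)])
  show "sigma_pm (q+2) (PsiS' (q+2) Y) i = pm (PsiS' (q+2) (transp_set i Y))" by (rule part_Psi'_low[OF i assms(2,1)])
next
  assume z: "q+1 \<notin> Z"
  show a: "sigma_pm (q+2) (PhiS (q+2) Z) (q+1) = pm (PhiS (q+2) Z)" by (rule fin_Phi_rm1_notin[OF assms(3) z assms(1)])
  show "sigma_pm (q+2) (PhiS (q+2) Z) (q+2) = pm (PhiS (q+2) Z)"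
    unfolding part_Phi_r[OF assms(3,1)] a pm_swap[symmetric] Phi_swap[OF assms(1,3)] ..
next
  assume z: "q+1 \<in> Z"
  show a: "sigma_pm (q+2) (PhiS (q+2) Z) (q+1) = pm (PsiS (q+2) (Z - {q+1}))" by (rule fin_Phi_rm1_in[OF assms(3) z assms(1)])
  show "sigma_pm (q+2) (PhiS (q+2) Z) (q+2) = pm (PsiS' (q+2) (Z - {q+1}))"
    unfolding part_Phi_r[OF assms(3,1)] a unfolding pm_swap[symmetric] PsiS'_def ..
next
  assume y: "q+1 \<notin> Y"
  have yz: "Y \<union> {q+1} \<subseteq> {1..q+1}" using assms by auto
  show a: "sigma_pm (q+2) (PsiS (q+2) Y) (q+1) = pm (PhiS (q+2) (Y \<union> {q+1}))" by (rule fin_Psi_rm1_notin[OF assms(2) y assms(1)])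
  show b: "sigma_pm (q+2) (PsiS (q+2) Y) (q+2) = pm (PsiS (q+2) Y)" by (rule fin_Psi_r[OF assms(2,1)])
  show "sigma_pm (q+2) (PsiS' (q+2) Y) (q+2) = pm (PhiS (q+2) (Y \<union> {q+1}))"
    unfolding part_Psi'_r a pm_swap[symmetric] Phi_swap[OF assms(1) yz] ..
  show "sigma_pm (q+2) (PsiS' (q+2) Y) (q+1) = pm (PsiS' (q+2) Y)"
    unfolding part_Psi'_rm1 b unfolding pm_swap[symmetric] PsiS'_def ..
next
  assume y: "q+1 \<in> Y"
  show a: "sigma_pm (q+2) (PsiS (q+2) Y) (q+1) = pm (PsiS (q+2) Y)" by (rule fin_Psi_rm1_in[OF assms(2) y assms(1)])
  show b: "sigma_pm (q+2) (PsiS (q+2) Y) (q+2) = pm (PsiS (q+2) Y)" by (rule fin_Psi_r[OF assms(2,1)])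
  show "sigma_pm (q+2) (PsiS' (q+2) Y) (q+1) = pm (PsiS' (q+2) Y)"
    unfolding part_Psi'_rm1 b unfolding pm_swap[symmetric] PsiS'_def ..
  show "sigma_pm (q+2) (PsiS' (q+2) Y) (q+2) = pm (PsiS' (q+2) Y)"
    unfolding part_Psi'_r a unfolding pm_swap[symmetric] PsiS'_def ..
qed


theorem proposition3p12:
  fixes r :: nat and Y Z :: "nat set"
  assumes "r \<ge> 3" and "Y \<subseteq> {1..r-1}" and "Z \<subseteq> {1..r-1}"
    and "card Y < card Z" and "card Z < r"
  shows
    "(\<forall>i\<in>{1..r-2}.
        sigma_pm r (PhiS r Z) i = pm (PhiS r (transp_set i Z)) \<and>
        sigma_pm r (PsiS r Y) i = pm (PsiS r (transp_set i Y)) \<and>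
        sigma_pm r (PsiS' r Y) i = pm (PsiS' r (transp_set i Y)))
   \<and> (r - 1 \<notin> Z \<longrightarrow>
        sigma_pm r (PhiS r Z) (r - 1) = pm (PhiS r Z) \<and>
        sigma_pm r (PhiS r Z) r = pm (PhiS r Z))
   \<and> (r - 1 \<in> Z \<longrightarrow>
        sigma_pm r (PhiS r Z) (r - 1) = pm (PsiS r (Z - {r - 1})) \<and>
        sigma_pm r (PhiS r Z) r = pm (PsiS' r (Z - {r - 1})))
   \<and> (r - 1 \<notin> Y \<longrightarrow>
        sigma_pm r (PsiS r Y) (r - 1) = pm (PhiS r (Y \<union> {r - 1})) \<and>
        sigma_pm r (PsiS r Y) r = pm (PsiS r Y) \<and>
        sigma_pm r (PsiS' r Y) r = pm (PhiS r (Y \<union> {r - 1})) \<and>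
        sigma_pm r (PsiS' r Y) (r - 1) = pm (PsiS' r Y))
   \<and> (r - 1 \<in> Y \<longrightarrow>
        sigma_pm r (PsiS r Y) (r - 1) = pm (PsiS r Y) \<and>
        sigma_pm r (PsiS r Y) r = pm (PsiS r Y) \<and>
        sigma_pm r (PsiS' r Y) (r - 1) = pm (PsiS' r Y) \<and>
        sigma_pm r (PsiS' r Y) r = pm (PsiS' r Y))"
  proof -
  define q where "q = r - 2"
  have r: "r = q+2" using assms(1) unfolding q_def by arith
  have q1: "1 \<le> q" using assms(1) unfolding q_def by arith
  have e: "q+2-1 = q+1" "q+2-2 = q" by auto
  have Y: "Y \<subseteq> {1..q+1}" using assms(2) unfolding r e .
  have Z: "Z \<subseteq> {1..q+1}" using assms(3) unfolding r e .
  show ?thesis unfolding r e using main_q[OF q1 Y Z] .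
qed

end
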